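(* Let $G$ be a (finite, simple) graph with at least one edge. Then $\mathrm{tw}(G) \le \mathrm{cocirc}(G)$, i.e. the treewidth of $G$ is at most its cocircumference.
   Context: A bond of a graph $G$ is an inclusion-wise minimal set of edges $F$ such that $G-F$ has more connected components than $G$. The cocircumference $\mathrm{cocirc}(G)$ of a graph with at least one edge is the maximum size of a bond of $G$. A tree-decomposition of $G$ is a family $\{X_u : u\in V(T)\}$ of subsets of $V(G)$ indexed by the nodes of a tree $T$ such that for every $x\in V(G)$ the nodes $u$ with $x\in X_u$ induce a non-empty subtree of $T$, and every edge $xy$ of $G$ satisfies $\{x,y\}\subseteq X_u$ for some $u$; its width is $\max_u |X_u|-1$, and the treewidth $\mathrm{tw}(G)$ is the minimum width of a tree-decomposition of $G$. *)

theory Defs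
  imports Main
begin

definition simple_graph :: "'a set \<Rightarrow> 'a set set \<Rightarrow> bool" where
  "simple_graph V E \<longleftrightarrow> finite V \<and>
     (\<forall>e\<in>E. \<exists>x y. x \<noteq> y \<and> x \<in> V \<and> y \<in> V \<and> e = {x, y})"

definition adj :: "'a set set \<Rightarrow> 'a \<Rightarrow> 'a \<Rightarrow> bool" where
  "adj E x y \<longleftrightarrow> x \<noteq> y \<and> {x, y} \<in> E"

definition conn_rel :: "'a set \<Rightarrow> 'a set set \<Rightarrow> ('a \<times> 'a) set" where
  "conn_rel V E = {(x, y). x \<in> V \<and> y \<in> V \<and> (adj E)\<^sup>*\<^sup>* x y}"

definition num_components :: "'a set \<Rightarrow> 'a set set \<Rightarrow> nat" where
  "num_components V E = card (V // conn_rel V E)"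

definition connected_graph :: "'a set \<Rightarrow> 'a set set \<Rightarrow> bool" where
  "connected_graph V E \<longleftrightarrow> V \<noteq> {} \<and> (\<forall>x\<in>V. \<forall>y\<in>V. (adj E)\<^sup>*\<^sup>* x y)"

definition is_bond :: "'a set \<Rightarrow> 'a set set \<Rightarrow> 'a set set \<Rightarrow> bool" where
  "is_bond V E F \<longleftrightarrow> F \<subseteq> E \<and> num_components V (E - F) > num_components V E \<and>
     (\<forall>F'. F' \<subset> F \<longrightarrow> \<not> (num_components V (E - F') > num_components V E))"

definition cocirc :: "'a set \<Rightarrow> 'a set set \<Rightarrow> nat" where
  "cocirc V E = Max (card ` {F. is_bond V E F})"

definition is_tree :: "nat set \<Rightarrow> nat set set \<Rightarrow> bool" where
  "is_tree N TE \<longleftrightarrow> simple_graph N TE \<and> connected_graph N TE \<and>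
     (\<forall>e\<in>TE. \<not> connected_graph N (TE - {e}))"

definition tree_decomposition ::
  "'a set \<Rightarrow> 'a set set \<Rightarrow> nat set \<Rightarrow> nat set set \<Rightarrow> (nat \<Rightarrow> 'a set) \<Rightarrow> bool" where
  "tree_decomposition V E N TE X \<longleftrightarrow>
     is_tree N TE \<and>
     (\<forall>u\<in>N. X u \<subseteq> V) \<and>
     (\<forall>x\<in>V. connected_graph {u\<in>N. x \<in> X u} {e\<in>TE. e \<subseteq> {u\<in>N. x \<in> X u}}) \<and>
     (\<forall>e\<in>E. \<exists>u\<in>N. e \<subseteq> X u)"

definition td_width :: "nat set \<Rightarrow> (nat \<Rightarrow> 'a set) \<Rightarrow> nat" where
  "td_width N X = Max ((\<lambda>u. card (X u)) ` N) - 1"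

definition treewidth :: "'a set \<Rightarrow> 'a set set \<Rightarrow> nat" where
  "treewidth V E = Min {td_width N X | N TE X. tree_decomposition V E N TE X}"

end

theory Submission
  imports Defs
begin


lemma adj_sym: "adj F x y \<Longrightarrow> adj F y x"
  by (auto simp: adj_def insert_commute)

lemma rtp_sym: "(adj F)\<^sup>*\<^sup>* x y \<Longrightarrow> (adj F)\<^sup>*\<^sup>* y x"
proof (induction rule: rtranclp_induct)
  case base then show ?case by simp
next
  case (step y z) then show ?case
    by (meson adj_sym converse_rtranclp_into_rtranclp)
qed

lemma rtp_map:
  assumes "\<And>x y. R x y \<Longrightarrow> S\<^sup>*\<^sup>* (f x) (f y)" and "R\<^sup>*\<^sup>* x y"
  shows "S\<^sup>*\<^sup>* (f x) (f y)"
  using assms(2)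
proof (induction rule: rtranclp_induct)
  case base then show ?case by simp
next
  case (step y z) then show ?case using assms(1) by (meson rtranclp_trans)
qed

lemma adj_mono: "F \<subseteq> G \<Longrightarrow> (adj F)\<^sup>*\<^sup>* x y \<Longrightarrow> (adj G)\<^sup>*\<^sup>* x y"
proof -
  assume FG: "F \<subseteq> G" and p: "(adj F)\<^sup>*\<^sup>* x y"
  have "\<And>a b. adj F a b \<Longrightarrow> (adj G)\<^sup>*\<^sup>* (id a) (id b)"
    using FG unfolding adj_def by auto
  from rtp_map[OF this p] show ?thesis by simp
qed

lemma conn_mono: "connected_graph A F \<Longrightarrow> F \<subseteq> G \<Longrightarrow> connected_graph A G"
proof -
  assume a: "connected_graph A F" "F \<subseteq> G"
  show ?thesis unfolding connected_graph_def
  proof (intro conjI ballI)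
    show "A \<noteq> {}" using a(1) unfolding connected_graph_def by simp
  next
    fix x y assume "x \<in> A" "y \<in> A"
    then have "(adj F)\<^sup>*\<^sup>* x y" using a(1) unfolding connected_graph_def by simp
    then show "(adj G)\<^sup>*\<^sup>* x y" using adj_mono[OF a(2)] by simp
  qed
qed

lemma conn_union:
  assumes "connected_graph A1 F1" "connected_graph A2 F2" "a \<in> A1" "b \<in> A2"
    "F1 \<subseteq> F" "F2 \<subseteq> F" "a \<noteq> b" "{a,b} \<in> F"
  shows "connected_graph (A1 \<union> A2) F"
proof -
  have ab: "(adj F)\<^sup>*\<^sup>* a b" using assms(7,8) by (auto simp: adj_def)
  have ba: "(adj F)\<^sup>*\<^sup>* b a" using rtp_sym[OF ab] .
  have c1: "\<forall>x\<in>A1. \<forall>y\<in>A1. (adj F)\<^sup>*\<^sup>* x y"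
    using conn_mono[OF assms(1,5)] unfolding connected_graph_def by simp
  have c2: "\<forall>x\<in>A2. \<forall>y\<in>A2. (adj F)\<^sup>*\<^sup>* x y"
    using conn_mono[OF assms(2,6)] unfolding connected_graph_def by simp
  show ?thesis unfolding connected_graph_def
  proof (intro conjI ballI)
    show "A1 \<union> A2 \<noteq> {}" using assms(3) by auto
  next
    fix x y assume x: "x \<in> A1 \<union> A2" and y: "y \<in> A1 \<union> A2"
    have xa: "(adj F)\<^sup>*\<^sup>* x a"
    proof (cases "x \<in> A1")
      case True then show ?thesis using c1 assms(3) by simp
    next
      case False then have "x \<in> A2" using x by simp
      then have "(adj F)\<^sup>*\<^sup>* x b" using c2 assms(4) by simp
      then show ?thesis using ba by (rule rtranclp_trans)
    qed
    have ay: "(adj F)\<^sup>*\<^sup>* a y"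
    proof (cases "y \<in> A1")
      case True then show ?thesis using c1 assms(3) by simp
    next
      case False then have "y \<in> A2" using y by simp
      then have "(adj F)\<^sup>*\<^sup>* b y" using c2 assms(4) by simp
      then show ?thesis using ab by (rule rtranclp_trans[rotated])
    qed
    show "(adj F)\<^sup>*\<^sup>* x y" using xa ay by (rule rtranclp_trans)
  qed
qed

lemma conn_hub:
  assumes "v \<in> U" "\<forall>p\<in>U. (adj F)\<^sup>*\<^sup>* p v"
  shows "connected_graph U F"
  unfolding connected_graph_def
proof (intro conjI ballI)
  show "U \<noteq> {}" using assms(1) by auto
next
  fix x y assume "x \<in> U" "y \<in> U"
  then have "(adj F)\<^sup>*\<^sup>* x v" "(adj F)\<^sup>*\<^sup>* y v" using assms(2) by auto
  then show "(adj F)\<^sup>*\<^sup>* x y" using rtp_sym[of F y v] rtranclp_trans[of "adj F" x v y] by simp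
qed

lemma closed_path:
  assumes "(adj F)\<^sup>*\<^sup>* p z" "p \<in> A" "\<forall>e\<in>F. e \<inter> A \<noteq> {} \<longrightarrow> e \<subseteq> A"
  shows "z \<in> A"
  using assms(1,2)
proof (induction rule: rtranclp_induct)
  case base then show ?case by simp
next
  case (step y z)
  then have "{y,z} \<in> F" "y \<in> A" unfolding adj_def by auto
  then have "{y,z} \<subseteq> A" using assms(3) by auto
  then show ?case by simp
qed

lemma tree_single: "is_tree {m} {}"
  unfolding is_tree_def simple_graph_def connected_graph_def by auto

lemma tree_edges: "is_tree N T \<Longrightarrow> e \<in> T \<Longrightarrow> \<exists>x y. x \<noteq> y \<and> x \<in> N \<and> y \<in> N \<and> e = {x,y}"
  unfolding is_tree_def simple_graph_def by blast

lemma tree_bridge_left: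
  assumes t1: "is_tree N1 T1" and t2: "is_tree N2 T2" and d: "N1 \<inter> N2 = {}"
    and a: "a \<in> N1" and b: "b \<in> N2" and e: "e \<in> T1"
  shows "\<not> connected_graph (N1 \<union> N2) ((T1 \<union> T2 \<union> {{a,b}}) - {e})"
proof
  assume c: "connected_graph (N1 \<union> N2) ((T1 \<union> T2 \<union> {{a,b}}) - {e})"
  have "\<not> connected_graph N1 (T1 - {e})" using t1 e unfolding is_tree_def by blast
  then obtain p q where pq: "p \<in> N1" "q \<in> N1" "\<not> (adj (T1 - {e}))\<^sup>*\<^sup>* p q"
    using a unfolding connected_graph_def by blast
  have path: "(adj ((T1 \<union> T2 \<union> {{a,b}}) - {e}))\<^sup>*\<^sup>* p q"
    using c pq(1,2) unfolding connected_graph_def by blast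
  define f where "f z = (if z \<in> N1 then z else a)" for z
  have step: "(adj (T1 - {e}))\<^sup>*\<^sup>* (f x) (f y)"
    if "adj ((T1 \<union> T2 \<union> {{a,b}}) - {e}) x y" for x y
  proof -
    from that have xy: "x \<noteq> y" "{x,y} \<in> (T1 \<union> T2 \<union> {{a,b}}) - {e}" unfolding adj_def by auto
    then consider "{x,y} \<in> T1 - {e}" | "{x,y} \<in> T2" | "{x,y} = {a,b}" by auto
    then show ?thesis
    proof cases
      case 1
      then obtain u w where "u \<in> N1" "w \<in> N1" "{x,y} = {u,w}" using tree_edges[OF t1] by blast
      then have "x \<in> N1" "y \<in> N1" by (auto simp: doubleton_eq_iff)
      then show ?thesis using 1 xy(1) unfolding f_def adj_def by auto
    next
      case 2
      then obtain u w where "u \<in> N2" "w \<in> N2" "{x,y} = {u,w}" using tree_edges[OF t2] by blast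
      then have "x \<notin> N1" "y \<notin> N1" using d by (auto simp: doubleton_eq_iff)
      then show ?thesis unfolding f_def by simp
    next
      case 3
      then have "f x = a" "f y = a" using a b d unfolding f_def by (auto simp: doubleton_eq_iff)
      then show ?thesis by simp
    qed
  qed
  have "(adj (T1 - {e}))\<^sup>*\<^sup>* (f p) (f q)" using rtp_map[of "adj ((T1 \<union> T2 \<union> {{a,b}}) - {e})" "adj (T1 - {e})" f p q, OF step path] by simp
  then show False using pq unfolding f_def by simp
qed

lemma tree_glue:
  assumes t1: "is_tree N1 T1" and t2: "is_tree N2 T2" and d: "N1 \<inter> N2 = {}"
    and a: "a \<in> N1" and b: "b \<in> N2"
  shows "is_tree (N1 \<union> N2) (T1 \<union> T2 \<union> {{a,b}})"
proof -
  have ab: "a \<noteq> b" using a b d by auto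
  have sg: "simple_graph (N1 \<union> N2) (T1 \<union> T2 \<union> {{a,b}})"
    unfolding simple_graph_def
  proof (intro conjI ballI)
    show "finite (N1 \<union> N2)" using t1 t2 unfolding is_tree_def simple_graph_def by simp
  next
    fix e assume "e \<in> T1 \<union> T2 \<union> {{a,b}}"
    then consider "e \<in> T1" | "e \<in> T2" | "e = {a,b}" by auto
    then show "\<exists>x y. x \<noteq> y \<and> x \<in> N1 \<union> N2 \<and> y \<in> N1 \<union> N2 \<and> e = {x, y}"
    proof cases
      case 1 then obtain x y where "x \<noteq> y" "x \<in> N1" "y \<in> N1" "e = {x,y}" using tree_edges[OF t1] by blast
      then show ?thesis by blast
    next
      case 2 then obtain x y where "x \<noteq> y" "x \<in> N2" "y \<in> N2" "e = {x,y}" using tree_edges[OF t2] by blast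
      then show ?thesis by blast
    next
      case 3 then show ?thesis using a b ab by blast
    qed
  qed
  have cg: "connected_graph (N1 \<union> N2) (T1 \<union> T2 \<union> {{a,b}})"
    by (rule conn_union[of N1 T1 N2 T2 a b]) (use t1 t2 a b ab in \<open>simp_all add: is_tree_def, auto\<close>)
  have br: "\<not> connected_graph (N1 \<union> N2) ((T1 \<union> T2 \<union> {{a,b}}) - {e})"
    if e: "e \<in> T1 \<union> T2 \<union> {{a,b}}" for e
  proof -
    consider "e \<in> T1" | "e \<in> T2" | "e = {a,b}" using e by auto
    then show ?thesis
    proof cases
      case 1 then show ?thesis using tree_bridge_left[OF t1 t2 d a b] by blast
    next
      case 2
      have "\<not> connected_graph (N2 \<union> N1) ((T2 \<union> T1 \<union> {{b,a}}) - {e})"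
        using tree_bridge_left[OF t2 t1 _ b a 2] d by blast
      moreover have "N2 \<union> N1 = N1 \<union> N2" "T2 \<union> T1 \<union> {{b,a}} = T1 \<union> T2 \<union> {{a,b}}"
        by (auto simp: insert_commute)
      ultimately show ?thesis by simp
    next
      case 3
      show ?thesis
      proof
        assume c: "connected_graph (N1 \<union> N2) ((T1 \<union> T2 \<union> {{a,b}}) - {e})"
        then have p: "(adj ((T1 \<union> T2 \<union> {{a,b}}) - {e}))\<^sup>*\<^sup>* a b"
          using a b unfolding connected_graph_def by blast
        have cl: "\<forall>f\<in>(T1 \<union> T2 \<union> {{a,b}}) - {e}. f \<inter> N1 \<noteq> {} \<longrightarrow> f \<subseteq> N1"
        proof (intro ballI impI)
          fix f assume f: "f \<in> (T1 \<union> T2 \<union> {{a,b}}) - {e}" "f \<inter> N1 \<noteq> {}"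
          then have "f \<in> T1 \<or> f \<in> T2" using 3 by auto
          then show "f \<subseteq> N1" using tree_edges[OF t1, of f] tree_edges[OF t2, of f] f(2) d by auto
        qed
        have "b \<in> N1" using closed_path[OF p a cl] .
        then show False using b d by auto
      qed
    qed
  qed
  show ?thesis unfolding is_tree_def using sg cg br by blast
qed



definition td' :: "nat set \<Rightarrow> nat set set \<Rightarrow> (nat \<Rightarrow> 'a set) \<Rightarrow> bool" where
  "td' N TE X \<longleftrightarrow> is_tree N TE \<and>
     (\<forall>x\<in>\<Union>(X ` N). connected_graph {u\<in>N. x \<in> X u} {e\<in>TE. e \<subseteq> {u\<in>N. x \<in> X u}})"

lemma td_single: "td' {m} {} (\<lambda>_. B)"
  unfolding td'_def
proof (intro conjI ballI)
  show "is_tree {m} {}" by (rule tree_single)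
next
  fix x assume "x \<in> \<Union>((\<lambda>_. B) ` {m})"
  then have "{u\<in>{m}. x \<in> B} = {m}" by auto
  then show "connected_graph {u\<in>{m}. x \<in> B} {e\<in>{}. e \<subseteq> {u\<in>{m}. x \<in> B}}"
    unfolding connected_graph_def by simp
qed

lemma td_glue:
  assumes d1: "td' N1 T1 X1" and d2: "td' N2 T2 X2" and d: "N1 \<inter> N2 = {}"
    and a: "a \<in> N1" and b: "b \<in> N2"
    and cond: "\<And>x. x \<in> \<Union>(X1 ` N1) \<Longrightarrow> x \<in> \<Union>(X2 ` N2) \<Longrightarrow> x \<in> X1 a \<and> x \<in> X2 b"
  shows "td' (N1 \<union> N2) (T1 \<union> T2 \<union> {{a,b}}) (\<lambda>u. if u \<in> N1 then X1 u else X2 u)"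
  unfolding td'_def
proof (intro conjI ballI)
  show "is_tree (N1 \<union> N2) (T1 \<union> T2 \<union> {{a,b}})"
  proof -
    have "is_tree N1 T1" "is_tree N2 T2" using d1 d2 unfolding td'_def by simp_all
    then show ?thesis by (rule tree_glue[OF _ _ d a b])
  qed
next
  define X where "X = (\<lambda>u. if u \<in> N1 then X1 u else X2 u)"
  define T where "T = T1 \<union> T2 \<union> {{a,b}}"
  fix x assume x: "x \<in> \<Union>((\<lambda>u. if u \<in> N1 then X1 u else X2 u) ` (N1 \<union> N2))"
  define O1 where "O1 = {u\<in>N1. x \<in> X1 u}"
  define O2 where "O2 = {u\<in>N2. x \<in> X2 u}"
  have O: "{u\<in>N1 \<union> N2. x \<in> (if u \<in> N1 then X1 u else X2 u)} = O1 \<union> O2"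
    unfolding O1_def O2_def using d by auto
  have F1: "{e\<in>T1. e \<subseteq> O1} \<subseteq> {e\<in>T. e \<subseteq> O1 \<union> O2}" unfolding T_def by auto
  have F2: "{e\<in>T2. e \<subseteq> O2} \<subseteq> {e\<in>T. e \<subseteq> O1 \<union> O2}" unfolding T_def by auto
  have c1: "connected_graph O1 {e\<in>T1. e \<subseteq> O1}" if "O1 \<noteq> {}"
  proof -
    have "x \<in> \<Union>(X1 ` N1)" using that unfolding O1_def by auto
    then show ?thesis using d1 unfolding td'_def O1_def by (rule bspec[OF conjunct2, rotated])
  qed
  have c2: "connected_graph O2 {e\<in>T2. e \<subseteq> O2}" if "O2 \<noteq> {}"
  proof -
    have "x \<in> \<Union>(X2 ` N2)" using that unfolding O2_def by auto
    then show ?thesis using d2 unfolding td'_def O2_def by (rule bspec[OF conjunct2, rotated])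
  qed
  have ne: "O1 \<union> O2 \<noteq> {}" using x O by auto
  have "connected_graph (O1 \<union> O2) {e\<in>T. e \<subseteq> O1 \<union> O2}"
  proof (cases "O2 = {}")
    case True
    then have "O1 \<noteq> {}" using ne by simp
    then show ?thesis using conn_mono[OF c1 F1] True by simp
  next
    case False
    note F = this
    show ?thesis
    proof (cases "O1 = {}")
      case True
      then show ?thesis using conn_mono[OF c2[OF F] F2] True by simp
    next
      case False
      have "x \<in> \<Union>(X1 ` N1)" "x \<in> \<Union>(X2 ` N2)" using False F unfolding O1_def O2_def by auto
      then have "x \<in> X1 a" "x \<in> X2 b" using cond by auto
      then have ab: "a \<in> O1" "b \<in> O2" using a b unfolding O1_def O2_def by auto
      have "a \<noteq> b" using a b d by auto
      moreover have "{a,b} \<in> {e\<in>T. e \<subseteq> O1 \<union> O2}" using ab unfolding T_def by auto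
      ultimately show ?thesis using conn_union[OF c1[OF False] c2[OF F] ab F1 F2] by simp
    qed
  qed
  then show "connected_graph {u\<in>N1 \<union> N2. x \<in> (if u \<in> N1 then X1 u else X2 u)}
       {e\<in>T1 \<union> T2 \<union> {{a,b}}. e \<subseteq> {u\<in>N1 \<union> N2. x \<in> (if u \<in> N1 then X1 u else X2 u)}}"
    unfolding O T_def .
qed

definition nbr :: "'a set set \<Rightarrow> 'a set \<Rightarrow> 'a set" where
  "nbr E S = {w. w \<notin> S \<and> (\<exists>x\<in>S. adj E x w)}"

definition good :: "'a set set \<Rightarrow> nat \<Rightarrow> 'a set \<Rightarrow> nat \<Rightarrow> nat set \<Rightarrow> nat set set \<Rightarrow> (nat \<Rightarrow> 'a set) \<Rightarrow> bool" where
  "good E K C m N TE X \<longleftrightarrow> td' N TE X \<and> m \<in> N \<and> N \<subseteq> {m..} \<and>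
     (\<forall>u\<in>N. X u \<subseteq> C \<union> nbr E C \<and> card (X u) \<le> K) \<and> nbr E C \<subseteq> X m \<and> C \<subseteq> \<Union>(X ` N) \<and>
     (\<forall>e\<in>E. e \<inter> C \<noteq> {} \<longrightarrow> (\<exists>u\<in>N. e \<subseteq> X u))"

lemma goodD:
  assumes "good E K C m N TE X"
  shows "td' N TE X" "m \<in> N" "N \<subseteq> {m..}" "\<forall>u\<in>N. X u \<subseteq> C \<union> nbr E C \<and> card (X u) \<le> K"
    "nbr E C \<subseteq> X m" "C \<subseteq> \<Union>(X ` N)" "\<forall>e\<in>E. e \<inter> C \<noteq> {} \<longrightarrow> (\<exists>u\<in>N. e \<subseteq> X u)"
  using assms unfolding good_def by simp_all

lemma td_finite: "td' N TE X \<Longrightarrow> finite N"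
  unfolding td'_def is_tree_def simple_graph_def by simp

lemma glue_many:
  assumes "finite CC" "\<forall>C\<in>CC. \<forall>m. \<exists>N TE X. good E K C m N TE X"
    "\<forall>C1\<in>CC. \<forall>C2\<in>CC. C1 \<noteq> C2 \<longrightarrow> C1 \<inter> C2 = {}" "\<forall>C\<in>CC. nbr E C \<subseteq> B \<and> C \<inter> B = {}"
    "card B \<le> K"
  shows "\<exists>N TE X. td' N TE X \<and> m \<in> N \<and> N \<subseteq> {m..} \<and> X m = B \<and>
     (\<forall>u\<in>N. X u \<subseteq> B \<union> \<Union>CC \<union> \<Union>(nbr E ` CC) \<and> card (X u) \<le> K) \<and> \<Union>CC \<subseteq> \<Union>(X ` N) \<and>
     (\<forall>e\<in>E. e \<inter> \<Union>CC \<noteq> {} \<longrightarrow> (\<exists>u\<in>N. e \<subseteq> X u))"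
  using assms
proof (induction CC rule: finite_induct)
  case empty
  show ?case
    by (rule exI[of _ "{m}"], rule exI[of _ "{}"], rule exI[of _ "\<lambda>_. B"])
      (use td_single empty.prems(4) in auto)
next
  case (insert C CC)
  have h2: "\<forall>C\<in>CC. \<forall>m. \<exists>N TE X. good E K C m N TE X" using insert.prems(1) by simp
  have h3: "\<forall>C1\<in>CC. \<forall>C2\<in>CC. C1 \<noteq> C2 \<longrightarrow> C1 \<inter> C2 = {}" using insert.prems(2) by simp
  have h4: "\<forall>C\<in>CC. nbr E C \<subseteq> B \<and> C \<inter> B = {}" using insert.prems(3) by simp
  obtain N1 T1 X1 where D1: "td' N1 T1 X1" "m \<in> N1" "N1 \<subseteq> {m..}" "X1 m = B"
    "\<forall>u\<in>N1. X1 u \<subseteq> B \<union> \<Union>CC \<union> \<Union>(nbr E ` CC) \<and> card (X1 u) \<le> K"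
    "\<Union>CC \<subseteq> \<Union>(X1 ` N1)" "\<forall>e\<in>E. e \<inter> \<Union>CC \<noteq> {} \<longrightarrow> (\<exists>u\<in>N1. e \<subseteq> X1 u)"
    using insert.IH[OF h2 h3 h4 insert.prems(4)] by (elim exE conjE) (rule that)
  have fin: "finite N1" using td_finite[OF D1(1)] .
  define m' where "m' = Suc (Max N1)"
  have mm': "m < m'" using Max_ge[OF fin D1(2)] unfolding m'_def by simp
  obtain N2 T2 X2 where G: "good E K C m' N2 T2 X2" using insert.prems(1) by blast
  note D2 = goodD[OF G]
  have disj: "N1 \<inter> N2 = {}"
  proof -
    have "u < m'" if "u \<in> N1" for u using Max_ge[OF fin that] unfolding m'_def by simp
    moreover have "m' \<le> u" if "u \<in> N2" for u using D2 that by auto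
    ultimately show ?thesis by fastforce
  qed
  have m'N2: "m' \<in> N2" using D2 by simp
  define X where "X = (\<lambda>u. if u \<in> N1 then X1 u else X2 u)"
  have XN2: "X u = X2 u" if "u \<in> N2" for u using disj that unfolding X_def by auto
  have cond: "x \<in> X1 m \<and> x \<in> X2 m'" if x1: "x \<in> \<Union>(X1 ` N1)" and x2: "x \<in> \<Union>(X2 ` N2)" for x
  proof -
    obtain u where u: "u \<in> N2" "x \<in> X2 u" using x2 by auto
    then have xC: "x \<in> C \<union> nbr E C" using D2 by blast
    obtain u' where u': "u' \<in> N1" "x \<in> X1 u'" using x1 by auto
    then have xB: "x \<in> B \<union> \<Union>CC \<union> \<Union>(nbr E ` CC)" using D1(5) by blast
    have "x \<notin> C"
    proof
      assume xc: "x \<in> C"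
      have "x \<notin> B" using xc insert.prems(3) by auto
      moreover have "x \<notin> \<Union>CC"
      proof
        assume "x \<in> \<Union>CC"
        then obtain C' where "C' \<in> CC" "x \<in> C'" by auto
        moreover have "C' \<noteq> C" using \<open>C' \<in> CC\<close> insert.hyps(2) by auto
        ultimately show False using insert.prems(2) xc by blast
      qed
      moreover have "x \<notin> \<Union>(nbr E ` CC)" using h4 \<open>x \<notin> B\<close> by blast
      ultimately show False using xB by blast
    qed
    then have "x \<in> nbr E C" using xC by simp
    then show ?thesis using D1(4) D2 insert.prems(3) by auto
  qed
  have TD: "td' (N1 \<union> N2) (T1 \<union> T2 \<union> {{m,m'}}) X"
    unfolding X_def by (rule td_glue[OF D1(1) D2(1) disj D1(2) m'N2 cond])
  show ?case
  proof (intro exI conjI)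
    show "td' (N1 \<union> N2) (T1 \<union> T2 \<union> {{m,m'}}) X" by (rule TD)
    show "m \<in> N1 \<union> N2" using D1(2) by simp
    show "N1 \<union> N2 \<subseteq> {m..}" using D1(3) D2 mm' by auto
    show "X m = B" using D1(2,4) unfolding X_def by simp
    show "\<forall>u\<in>N1 \<union> N2. X u \<subseteq> B \<union> \<Union>(insert C CC) \<union> \<Union>(nbr E ` insert C CC) \<and> card (X u) \<le> K"
    proof
      fix u assume "u \<in> N1 \<union> N2"
      then consider "u \<in> N1" | "u \<in> N2" "u \<notin> N1" by auto
      then show "X u \<subseteq> B \<union> \<Union>(insert C CC) \<union> \<Union>(nbr E ` insert C CC) \<and> card (X u) \<le> K"
      proof cases
        case 1 then show ?thesis using D1(5) unfolding X_def by auto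
      next
        case 2 then show ?thesis using D2 unfolding X_def by auto
      qed
    qed
    show "\<Union>(insert C CC) \<subseteq> \<Union>(X ` (N1 \<union> N2))"
    proof -
      have "\<Union>CC \<subseteq> \<Union>(X ` (N1 \<union> N2))" using D1(6) unfolding X_def by auto
      moreover have "C \<subseteq> \<Union>(X ` (N1 \<union> N2))"
      proof
        fix x assume "x \<in> C"
        then obtain u where "u \<in> N2" "x \<in> X2 u" using D2 by blast
        then show "x \<in> \<Union>(X ` (N1 \<union> N2))" using XN2 by auto
      qed
      ultimately show ?thesis by auto
    qed
    show "\<forall>e\<in>E. e \<inter> \<Union>(insert C CC) \<noteq> {} \<longrightarrow> (\<exists>u\<in>N1 \<union> N2. e \<subseteq> X u)"
    proof (intro ballI impI)
      fix e assume e: "e \<in> E" "e \<inter> \<Union>(insert C CC) \<noteq> {}"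
      then consider "e \<inter> C \<noteq> {}" | "e \<inter> \<Union>CC \<noteq> {}" by auto
      then show "\<exists>u\<in>N1 \<union> N2. e \<subseteq> X u"
      proof cases
        case 1
        then obtain u where "u \<in> N2" "e \<subseteq> X2 u" using D2 e(1) by blast
        then show ?thesis using XN2 by auto
      next
        case 2
        then obtain u where "u \<in> N1" "e \<subseteq> X1 u" using D1(7) e(1) by blast
        then show ?thesis unfolding X_def by auto
      qed
    qed
  qed
qed



definition Esub :: "'a set set \<Rightarrow> 'a set \<Rightarrow> 'a set set" where
  "Esub E S = {e\<in>E. e \<subseteq> S}"
definition sconn :: "'a set set \<Rightarrow> 'a set \<Rightarrow> bool" where
  "sconn E S \<longleftrightarrow> connected_graph S (Esub E S)"
definition reach :: "'a set set \<Rightarrow> 'a set \<Rightarrow> 'a set" where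
  "reach E S = {y. \<exists>x\<in>S. (adj E)\<^sup>*\<^sup>* x y}"
definition cut :: "'a set set \<Rightarrow> 'a set \<Rightarrow> 'a set set" where
  "cut E S = {e\<in>E. e \<inter> S \<noteq> {} \<and> \<not> e \<subseteq> S}"
definition TT :: "'a set set \<Rightarrow> 'a set \<Rightarrow> 'a set" where
  "TT E S = reach E S - S"

lemma sg_edge: "simple_graph V E \<Longrightarrow> e \<in> E \<Longrightarrow> \<exists>x y. x \<noteq> y \<and> x \<in> V \<and> y \<in> V \<and> e = {x,y}"
  unfolding simple_graph_def by blast

lemma sg_adj: "simple_graph V E \<Longrightarrow> adj E x y \<Longrightarrow> x \<in> V \<and> y \<in> V"
proof -
  assume sg: "simple_graph V E" and a: "adj E x y"
  then have "{x,y} \<in> E" unfolding adj_def by simp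
  then obtain u w where "u \<in> V" "w \<in> V" "{x,y} = {u,w}" using sg_edge[OF sg] by blast
  then show ?thesis by (auto simp: doubleton_eq_iff)
qed

lemma sg_edges_sub: "simple_graph V E \<Longrightarrow> e \<in> E \<Longrightarrow> e \<subseteq> V"
  using sg_edge by fastforce

lemma finE: "simple_graph V E \<Longrightarrow> finite E"
proof -
  assume sg: "simple_graph V E"
  then have "E \<subseteq> Pow V" using sg_edges_sub by blast
  moreover have "finite V" using sg unfolding simple_graph_def by simp
  ultimately show ?thesis using finite_subset by blast
qed

lemma reach_V: "simple_graph V E \<Longrightarrow> S \<subseteq> V \<Longrightarrow> reach E S \<subseteq> V"
proof
  fix z assume sg: "simple_graph V E" and S: "S \<subseteq> V" and z: "z \<in> reach E S"
  then obtain x where x: "x \<in> S" "(adj E)\<^sup>*\<^sup>* x z" unfolding reach_def by blast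
  have "\<forall>e\<in>E. e \<inter> V \<noteq> {} \<longrightarrow> e \<subseteq> V" using sg_edges_sub[OF sg] by blast
  then show "z \<in> V" using closed_path[OF x(2)] x(1) S by blast
qed

lemma S_reach: "S \<subseteq> reach E S"
  unfolding reach_def by blast

lemma Esub_sub: "Esub E S \<subseteq> E" unfolding Esub_def by blast

lemma Esub_mono: "S \<subseteq> S' \<Longrightarrow> Esub E S \<subseteq> Esub E S'" unfolding Esub_def by blast

lemma sconn_path: "sconn E S \<Longrightarrow> x \<in> S \<Longrightarrow> y \<in> S \<Longrightarrow> (adj (Esub E S))\<^sup>*\<^sup>* x y"
  unfolding sconn_def connected_graph_def by simp

lemma sconn_pathE: "sconn E S \<Longrightarrow> x \<in> S \<Longrightarrow> y \<in> S \<Longrightarrow> (adj E)\<^sup>*\<^sup>* x y"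
  using sconn_path adj_mono[OF Esub_sub] by metis

lemma exit_edge:
  assumes "R\<^sup>*\<^sup>* x y" "x \<in> S" "y \<notin> S"
  shows "\<exists>a b. a \<in> S \<and> b \<notin> S \<and> R a b"
  using assms
proof (induction rule: rtranclp_induct)
  case base then show ?case by simp
next
  case (step y z)
  show ?case
  proof (cases "y \<in> S")
    case True then show ?thesis using step by blast
  next
    case False then show ?thesis using step by blast
  qed
qed

lemma nbr_TT: "nbr E S \<subseteq> TT E S"
proof
  fix w assume "w \<in> nbr E S"
  then obtain x where "x \<in> S" "adj E x w" "w \<notin> S" unfolding nbr_def by blast
  then show "w \<in> TT E S" unfolding TT_def reach_def by blast
qed

lemma quot_image:
  assumes "equiv V R1" "equiv V R2" "R1 \<subseteq> R2"
  shows "V // R2 = (\<lambda>c. R2 `` c) ` (V // R1)"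
proof -
  have eq: "R2 `` (R1 `` {x}) = R2 `` {x}" if "x \<in> V" for x
  proof
    show "R2 `` (R1 `` {x}) \<subseteq> R2 `` {x}"
      using assms(2,3) unfolding equiv_def trans_def by blast
    show "R2 `` {x} \<subseteq> R2 `` (R1 `` {x})"
      using assms(1) that unfolding equiv_def refl_on_def by blast
  qed
  show ?thesis unfolding quotient_def using eq by auto
qed

lemma quot_card_le:
  assumes "finite V" "equiv V R1" "equiv V R2" "R1 \<subseteq> R2"
  shows "card (V // R2) \<le> card (V // R1)"
  unfolding quot_image[OF assms(2-4)] by (rule card_image_le) (rule finite_quotient[OF assms(1) equiv_type[OF assms(2)]])

lemma quot_card_less:
  assumes "finite V" "equiv V R1" "equiv V R2" "R1 \<subseteq> R2" "(x,y) \<in> R2" "(x,y) \<notin> R1"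
  shows "card (V // R2) < card (V // R1)"
proof -
  have fin: "finite (V // R1)" by (rule finite_quotient[OF assms(1) equiv_type[OF assms(2)]])
  have xy: "x \<in> V" "y \<in> V" using assms(3,5) unfolding equiv_def refl_on_def by auto
  have c1: "R1 `` {x} \<in> V // R1" "R1 `` {y} \<in> V // R1" using xy unfolding quotient_def by auto
  have ne: "R1 `` {x} \<noteq> R1 `` {y}"
    using eq_equiv_class_iff[OF assms(2) xy] assms(6) by simp
  have im: "V // R2 = (\<lambda>c. R2 `` c) ` (V // R1)" by (rule quot_image[OF assms(2-4)])
  have e1: "R2 `` (R1 `` {x}) = R2 `` {x}"
  proof
    show "R2 `` (R1 `` {x}) \<subseteq> R2 `` {x}"
      using assms(3,4) unfolding equiv_def trans_def by blast
    show "R2 `` {x} \<subseteq> R2 `` (R1 `` {x})"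
      using assms(2) xy(1) unfolding equiv_def refl_on_def by blast
  qed
  have e2: "R2 `` (R1 `` {y}) = R2 `` {y}"
  proof
    show "R2 `` (R1 `` {y}) \<subseteq> R2 `` {y}"
      using assms(3,4) unfolding equiv_def trans_def by blast
    show "R2 `` {y} \<subseteq> R2 `` (R1 `` {y})"
      using assms(2) xy(2) unfolding equiv_def refl_on_def by blast
  qed
  have "R2 `` {x} = R2 `` {y}" using equiv_class_eq[OF assms(3,5)] .
  then have "R2 `` (R1 `` {x}) = R2 `` (R1 `` {y})" using e1 e2 by simp
  then have "\<not> inj_on (\<lambda>c. R2 `` c) (V // R1)"
    using c1 ne unfolding inj_on_def by blast
  then have "card ((\<lambda>c. R2 `` c) ` (V // R1)) \<noteq> card (V // R1)"
    using inj_on_iff_eq_card[OF fin] by blast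
  moreover have "card ((\<lambda>c. R2 `` c) ` (V // R1)) \<le> card (V // R1)" by (rule card_image_le[OF fin])
  ultimately show ?thesis unfolding im by simp
qed

lemma conn_equiv: "equiv V (conn_rel V F)"
  unfolding equiv_def refl_on_def sym_def trans_def conn_rel_def
  using rtp_sym by (auto intro: rtranclp_trans)

lemma conn_rel_mono: "F \<subseteq> G \<Longrightarrow> conn_rel V F \<subseteq> conn_rel V G"
proof
  fix p assume F: "F \<subseteq> G" and p: "p \<in> conn_rel V F"
  obtain x y where "p = (x,y)" "x \<in> V" "y \<in> V" "(adj F)\<^sup>*\<^sup>* x y" using p unfolding conn_rel_def by auto
  then show "p \<in> conn_rel V G" using adj_mono[OF F] unfolding conn_rel_def by auto
qed



lemma bond_cut:
  assumes sg: "simple_graph V E" and SV: "S \<subseteq> V" and cS: "sconn E S"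
    and Tne: "TT E S \<noteq> {}" and cT: "sconn E (TT E S)"
  shows "is_bond V E (cut E S)"
proof -
  have finV: "finite V" using sg unfolding simple_graph_def by simp
  define F where "F = cut E S"
  have FE: "F \<subseteq> E" unfolding F_def cut_def by blast
  have clos: "\<forall>e\<in>E - F. e \<inter> S \<noteq> {} \<longrightarrow> e \<subseteq> S" unfolding F_def cut_def by blast
  obtain y where y: "y \<in> TT E S" using Tne by blast
  then obtain x0 where x0: "x0 \<in> S" "(adj E)\<^sup>*\<^sup>* x0 y" "y \<notin> S" unfolding TT_def reach_def by blast
  have yV: "y \<in> V" using reach_V[OF sg SV] y unfolding TT_def by blast
  have in2: "(x0, y) \<in> conn_rel V E" using x0 SV yV unfolding conn_rel_def by auto
  have nin1: "(x0, y) \<notin> conn_rel V (E - F)"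
  proof
    assume "(x0, y) \<in> conn_rel V (E - F)"
    then have "(adj (E - F))\<^sup>*\<^sup>* x0 y" unfolding conn_rel_def by simp
    from closed_path[OF this x0(1) clos] show False using x0(3) by simp
  qed
  have less: "num_components V E < num_components V (E - F)"
    unfolding num_components_def
    by (rule quot_card_less[OF finV conn_equiv conn_equiv conn_rel_mono in2 nin1]) auto
  have minimal: "\<not> num_components V E < num_components V (E - F')" if F': "F' \<subset> F" for F'
  proof -
    obtain e0 where e0: "e0 \<in> F" "e0 \<notin> F'" using F' by blast
    have e0E: "e0 \<in> E" "e0 \<inter> S \<noteq> {}" "\<not> e0 \<subseteq> S" using e0(1) unfolding F_def cut_def by auto
    obtain u w where uw: "u \<noteq> w" "e0 = {u,w}" using sg_edge[OF sg e0E(1)] by blast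
    obtain a b where ab: "a \<in> S" "b \<notin> S" "e0 = {a,b}"
    proof (cases "u \<in> S")
      case True
      then have "w \<notin> S" using e0E(3) uw by auto
      then show ?thesis using that True uw by blast
    next
      case False
      then have "w \<in> S" using e0E(2) uw by auto
      then show ?thesis using that False uw by (simp add: insert_commute)
    qed
    have abne: "a \<noteq> b" using ab by auto
    have adjab: "adj (E - F') a b" using abne ab e0 e0E(1) unfolding adj_def by simp
    have bT: "b \<in> TT E S"
    proof -
      have "adj E a b" using abne ab e0E(1) unfolding adj_def by simp
      then have "(adj E)\<^sup>*\<^sup>* a b" by simp
      then show ?thesis using ab unfolding TT_def reach_def by blast
    qed
    have subS: "Esub E S \<subseteq> E - F'" using F' unfolding Esub_def F_def cut_def by blast
    have subT: "Esub E (TT E S) \<subseteq> E - F'"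
    proof
      fix e assume e: "e \<in> Esub E (TT E S)"
      then have "e \<in> E" "e \<subseteq> TT E S" unfolding Esub_def by auto
      then have "e \<inter> S = {}" unfolding TT_def by blast
      then have "e \<notin> F" unfolding F_def cut_def using sg_edge[OF sg \<open>e \<in> E\<close>] by auto
      then show "e \<in> E - F'" using F' \<open>e \<in> E\<close> by blast
    qed
    have cross: "(adj (E - F'))\<^sup>*\<^sup>* p q" if p: "p \<in> S" and q: "q \<notin> S" and pq: "adj E p q" for p q
    proof -
      have "(adj (Esub E S))\<^sup>*\<^sup>* p a" using sconn_path[OF cS p ab(1)] .
      then have 1: "(adj (E - F'))\<^sup>*\<^sup>* p a" using adj_mono[OF subS] by simp
      have qT: "q \<in> TT E S"
      proof -
        have "(adj E)\<^sup>*\<^sup>* p q" using pq by simp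
        then show ?thesis using p q unfolding TT_def reach_def by blast
      qed
      have "(adj (Esub E (TT E S)))\<^sup>*\<^sup>* b q" using sconn_path[OF cT bT qT] .
      then have 3: "(adj (E - F'))\<^sup>*\<^sup>* b q" using adj_mono[OF subT] by simp
      have "(adj (E - F'))\<^sup>*\<^sup>* p b" using 1 adjab by (rule rtranclp.rtrancl_into_rtrancl)
      then show ?thesis using 3 by (rule rtranclp_trans)
    qed
    have step: "(adj (E - F'))\<^sup>*\<^sup>* (id p) (id q)" if pq: "adj E p q" for p q
    proof (cases "{p,q} \<in> F'")
      case False
      then have "adj (E - F') p q" using pq unfolding adj_def by simp
      then show ?thesis by simp
    next
      case True
      then have "{p,q} \<in> F" using F' by blast
      then have pqc: "{p,q} \<inter> S \<noteq> {}" "\<not> {p,q} \<subseteq> S" unfolding F_def cut_def by auto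
      show ?thesis
      proof (cases "p \<in> S")
        case True
        then have "q \<notin> S" using pqc by simp
        then show ?thesis using cross[OF True _ pq] by simp
      next
        case False
        then have "q \<in> S" using pqc by simp
        then have "(adj (E - F'))\<^sup>*\<^sup>* q p" using cross[OF _ False adj_sym[OF pq]] by simp
        then show ?thesis using rtp_sym by simp
      qed
    qed
    have eqrel: "conn_rel V (E - F') = conn_rel V E"
    proof
      show "conn_rel V (E - F') \<subseteq> conn_rel V E" by (rule conn_rel_mono) blast
      show "conn_rel V E \<subseteq> conn_rel V (E - F')"
      proof
        fix r assume "r \<in> conn_rel V E"
        then obtain p q where r: "r = (p,q)" "p \<in> V" "q \<in> V" "(adj E)\<^sup>*\<^sup>* p q" unfolding conn_rel_def by auto
        have "(adj (E - F'))\<^sup>*\<^sup>* (id p) (id q)" by (rule rtp_map[of "adj E" "adj (E - F')" id, OF step r(4)])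
        then show "r \<in> conn_rel V (E - F')" using r unfolding conn_rel_def by simp
      qed
    qed
    show ?thesis unfolding num_components_def eqrel by simp
  qed
  show ?thesis unfolding is_bond_def F_def[symmetric] using FE less minimal by blast
qed

lemma card_nbr_cut:
  assumes sg: "simple_graph V E"
  shows "card (nbr E S) \<le> card (cut E S)"
proof -
  define g where "g e = (SOME w. w \<in> e \<and> w \<notin> S)" for e
  have sub: "nbr E S \<subseteq> g ` cut E S"
  proof
    fix w assume "w \<in> nbr E S"
    then obtain x where x: "x \<in> S" "adj E x w" "w \<notin> S" unfolding nbr_def by blast
    have ec: "{x,w} \<in> cut E S" using x unfolding adj_def cut_def by auto
    have "g {x,w} = w"
    proof -
      have ex: "\<exists>w'. w' \<in> {x,w} \<and> w' \<notin> S" using x by blast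
      have "g {x,w} \<in> {x,w} \<and> g {x,w} \<notin> S" unfolding g_def by (rule someI_ex[OF ex])
      then show ?thesis using x(1) by auto
    qed
    then show "w \<in> g ` cut E S" using ec by (metis imageI)
  qed
  have fc: "finite (cut E S)" using finE[OF sg] unfolding cut_def by simp
  have "card (nbr E S) \<le> card (g ` cut E S)" by (rule card_mono[OF finite_imageI[OF fc] sub])
  also have "\<dots> \<le> card (cut E S)" by (rule card_image_le[OF fc])
  finally show ?thesis .
qed

lemma nbr_le:
  assumes sg: "simple_graph V E" and SV: "S \<subseteq> V" and cS: "sconn E S"
    and T: "TT E S = {} \<or> sconn E (TT E S)"
  shows "card (nbr E S) \<le> cocirc V E"
proof (cases "TT E S = {}")
  case True
  then have "nbr E S = {}" using nbr_TT[of E S] by blast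
  then show ?thesis by simp
next
  case False
  then have b: "is_bond V E (cut E S)" using bond_cut[OF sg SV cS False] T by blast
  have fin: "finite (card ` {F. is_bond V E F})"
  proof -
    have "{F. is_bond V E F} \<subseteq> Pow E" unfolding is_bond_def by blast
    then have "finite {F. is_bond V E F}" using finE[OF sg] finite_subset by blast
    then show ?thesis by simp
  qed
  have "card (cut E S) \<le> cocirc V E" unfolding cocirc_def
    by (rule Max_ge[OF fin]) (use b in blast)
  then show ?thesis using card_nbr_cut[OF sg, of S] by simp
qed



definition gcomp :: "'a set set \<Rightarrow> 'a set \<Rightarrow> 'a \<Rightarrow> 'a set" where
  "gcomp E A y = {z\<in>A. (adj (Esub E A))\<^sup>*\<^sup>* y z}"

lemma Esub_closed: "\<forall>e\<in>Esub E A. e \<inter> A \<noteq> {} \<longrightarrow> e \<subseteq> A"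
  unfolding Esub_def by blast

lemma comp_sub: "gcomp E A y \<subseteq> A" unfolding gcomp_def by blast

lemma comp_self: "y \<in> A \<Longrightarrow> y \<in> gcomp E A y" unfolding gcomp_def by simp

lemma comp_path:
  assumes "(adj (Esub E A))\<^sup>*\<^sup>* y z" "y \<in> A"
  shows "(adj (Esub E (gcomp E A y)))\<^sup>*\<^sup>* y z"
  using assms(1)
proof (induction rule: rtranclp_induct)
  case base then show ?case by simp
next
  case (step z w)
  have zA: "z \<in> A" using closed_path[OF step(1) assms(2) Esub_closed] .
  have yw: "(adj (Esub E A))\<^sup>*\<^sup>* y w" using step(1,2) by (rule rtranclp.rtrancl_into_rtrancl)
  have wA: "w \<in> A" using closed_path[OF yw assms(2) Esub_closed] .
  have "z \<in> gcomp E A y" "w \<in> gcomp E A y" using zA wA step(1,2) unfolding gcomp_def by auto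
  moreover have "{z,w} \<in> Esub E A" "z \<noteq> w" using step(2) unfolding adj_def by auto
  ultimately have "adj (Esub E (gcomp E A y)) z w" unfolding adj_def Esub_def by auto
  then show ?case using step(3) by simp
qed

lemma comp_sconn: "y \<in> A \<Longrightarrow> sconn E (gcomp E A y)"
  unfolding sconn_def
proof (rule conn_hub[of y])
  assume y: "y \<in> A"
  show "y \<in> gcomp E A y" using comp_self[OF y] .
  show "\<forall>p\<in>gcomp E A y. (adj (Esub E (gcomp E A y)))\<^sup>*\<^sup>* p y"
  proof
    fix p assume "p \<in> gcomp E A y"
    then have "(adj (Esub E A))\<^sup>*\<^sup>* y p" unfolding gcomp_def by simp
    from rtp_sym[OF comp_path[OF this y]] show "(adj (Esub E (gcomp E A y)))\<^sup>*\<^sup>* p y" .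
  qed
qed

lemma comp_closed:
  assumes "x \<in> gcomp E A y" "w \<in> A" "adj E x w"
  shows "w \<in> gcomp E A y"
proof -
  have "x \<in> A" using assms(1) unfolding gcomp_def by simp
  then have "adj (Esub E A) x w" using assms(2,3) unfolding adj_def Esub_def by auto
  then show ?thesis using assms(1,2) unfolding gcomp_def by auto
qed

lemma comp_eq:
  assumes "z \<in> gcomp E A y"
  shows "gcomp E A z = gcomp E A y"
proof -
  have yz: "(adj (Esub E A))\<^sup>*\<^sup>* y z" using assms unfolding gcomp_def by simp
  have zy: "(adj (Esub E A))\<^sup>*\<^sup>* z y" using rtp_sym[OF yz] .
  show ?thesis unfolding gcomp_def using yz zy by (auto intro: rtranclp_trans)
qed

lemma comp_disj:
  assumes "C1 \<in> gcomp E A ` A" "C2 \<in> gcomp E A ` A" "C1 \<noteq> C2"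
  shows "C1 \<inter> C2 = {}"
proof (rule ccontr)
  assume "C1 \<inter> C2 \<noteq> {}"
  then obtain z where z: "z \<in> C1" "z \<in> C2" by blast
  obtain y1 y2 where "C1 = gcomp E A y1" "C2 = gcomp E A y2" using assms(1,2) by blast
  then have "C1 = gcomp E A z" "C2 = gcomp E A z" using comp_eq z by metis+
  then show False using assms(3) by simp
qed

lemma comp_union: "\<Union>(gcomp E A ` A) = A"
  using comp_sub comp_self by fastforce

lemma reach_mono: "S \<subseteq> S' \<Longrightarrow> reach E S \<subseteq> reach E S'"
  unfolding reach_def by blast

lemma reach_conn:
  assumes "sconn E S" "C \<subseteq> S" "C \<noteq> {}"
  shows "reach E C = reach E S"
proof
  show "reach E C \<subseteq> reach E S" by (rule reach_mono[OF assms(2)])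
  show "reach E S \<subseteq> reach E C"
  proof
    fix z assume "z \<in> reach E S"
    then obtain x where x: "x \<in> S" "(adj E)\<^sup>*\<^sup>* x z" unfolding reach_def by blast
    obtain y where y: "y \<in> C" using assms(3) by blast
    have "(adj E)\<^sup>*\<^sup>* y x" using sconn_pathE[OF assms(1)] y x(1) assms(2) by blast
    then have "(adj E)\<^sup>*\<^sup>* y z" using x(2) by (rule rtranclp_trans)
    then show "z \<in> reach E C" using y unfolding reach_def by blast
  qed
qed

lemma TT_child:
  assumes sg: "simple_graph V E" and SV: "S \<subseteq> V" and cS: "sconn E S"
    and T: "TT E S = {} \<or> sconn E (TT E S)" and v: "v \<in> S"
    and vb: "TT E S \<noteq> {} \<longrightarrow> (\<exists>b\<in>TT E S. adj E v b)"
    and y: "y \<in> S - {v}"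
  shows "sconn E (TT E (gcomp E (S - {v}) y))"
proof -
  define A where "A = S - {v}"
  define C where "C = gcomp E A y"
  have yA: "y \<in> A" using y unfolding A_def .
  have CA: "C \<subseteq> A" unfolding C_def by (rule comp_sub)
  have CS: "C \<subseteq> S" using CA unfolding A_def by blast
  have yC: "y \<in> C" unfolding C_def by (rule comp_self[OF yA])
  have vC: "v \<notin> C" using CA unfolding A_def by blast
  define U where "U = TT E S \<union> (S - C)"
  have TTC: "TT E C = U"
    unfolding U_def TT_def using reach_conn[OF cS CS] yC S_reach[of S E] CS by auto
  have vU: "v \<in> U" using v vC unfolding U_def by blast
  have gen: "(adj (Esub E S))\<^sup>*\<^sup>* p v \<Longrightarrow> p \<in> S \<Longrightarrow> p \<notin> C \<Longrightarrow> (adj (Esub E (S - C)))\<^sup>*\<^sup>* p v" for p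
  proof (induction rule: converse_rtranclp_induct)
    case base then show ?case by simp
  next
    case (step p p')
    show ?case
    proof (cases "p = v")
      case True then show ?thesis by simp
    next
      case False
      then have pA: "p \<in> A" using step.prems(1) unfolding A_def by blast
      have e: "{p,p'} \<in> E" "{p,p'} \<subseteq> S" "p \<noteq> p'" using step.hyps(1) unfolding adj_def Esub_def by auto
      then have p'S: "p' \<in> S" by simp
      have p'C: "p' \<notin> C"
      proof
        assume "p' \<in> C"
        moreover have "adj E p' p" using e unfolding adj_def by (auto simp: insert_commute)
        ultimately have "p \<in> C" unfolding C_def using comp_closed pA by metis
        then show False using step.prems(2) by simp
      qed
      have 1: "(adj (Esub E (S - C)))\<^sup>*\<^sup>* p' v" using step.IH[OF p'S p'C] .
      have "adj (Esub E (S - C)) p p'" using e p'C step.prems unfolding adj_def Esub_def by auto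
      then show ?thesis using 1 by (rule converse_rtranclp_into_rtranclp)
    qed
  qed
  have hub: "\<forall>p\<in>U. (adj (Esub E U))\<^sup>*\<^sup>* p v"
  proof
    fix p assume pU: "p \<in> U"
    show "(adj (Esub E U))\<^sup>*\<^sup>* p v"
    proof (cases "p \<in> S - C")
      case True
      then have "(adj (Esub E (S - C)))\<^sup>*\<^sup>* p v" using gen sconn_path[OF cS _ v] by blast
      moreover have "Esub E (S - C) \<subseteq> Esub E U" by (rule Esub_mono) (auto simp: U_def)
      ultimately show ?thesis using adj_mono by metis
    next
      case False
      then have pT: "p \<in> TT E S" using pU unfolding U_def by blast
      then have Tne: "TT E S \<noteq> {}" by blast
      then have cT: "sconn E (TT E S)" using T by simp
      obtain b where b: "b \<in> TT E S" "adj E v b" using vb Tne by blast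
      have "(adj (Esub E (TT E S)))\<^sup>*\<^sup>* p b" using sconn_path[OF cT pT b(1)] .
      moreover have "Esub E (TT E S) \<subseteq> Esub E U" by (rule Esub_mono) (auto simp: U_def)
      ultimately have 1: "(adj (Esub E U))\<^sup>*\<^sup>* p b" using adj_mono by metis
      have "b \<in> U" using b unfolding U_def by blast
      then have "adj (Esub E U) b v" using b(2) vU unfolding adj_def Esub_def by (auto simp: insert_commute)
      with 1 show ?thesis by (rule rtranclp.rtrancl_into_rtrancl)
    qed
  qed
  have "connected_graph U (Esub E U)" by (rule conn_hub[OF vU hub])
  then show ?thesis unfolding sconn_def C_def[symmetric] A_def[symmetric] TTC .
qed



lemma main_Q:
  assumes sg: "simple_graph V E"
  shows "S \<subseteq> V \<Longrightarrow> sconn E S \<Longrightarrow> TT E S = {} \<or> sconn E (TT E S) \<Longrightarrow>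
    \<exists>N TE X. good E (cocirc V E + 1) S m N TE X"
proof (induction "card S" arbitrary: S m rule: less_induct)
  case less
  define K where "K = cocirc V E + 1"
  have SV: "S \<subseteq> V" and cS: "sconn E S" and T: "TT E S = {} \<or> sconn E (TT E S)" using less.prems by auto
  have finV: "finite V" using sg unfolding simple_graph_def by simp
  have finS: "finite S" using finite_subset[OF SV finV] .
  have Sne: "S \<noteq> {}" using cS unfolding sconn_def connected_graph_def by simp
  obtain v where v: "v \<in> S" "TT E S \<noteq> {} \<longrightarrow> (\<exists>b\<in>TT E S. adj E v b)"
  proof (cases "TT E S = {}")
    case True
    then show ?thesis using that Sne by blast
  next
    case False
    then obtain y where y: "y \<in> TT E S" by blast
    then obtain x0 where x0: "x0 \<in> S" "(adj E)\<^sup>*\<^sup>* x0 y" "y \<notin> S" unfolding TT_def reach_def by blast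
    obtain a b where ab: "a \<in> S" "b \<notin> S" "adj E a b" using exit_edge[OF x0(2) x0(1) x0(3)] by blast
    have "(adj E)\<^sup>*\<^sup>* a b" using ab(3) by simp
    then have "b \<in> TT E S" using ab unfolding TT_def reach_def by blast
    then show ?thesis using that ab by blast
  qed
  define A where "A = S - {v}"
  define CC where "CC = gcomp E A ` A"
  define B where "B = insert v (nbr E S)"
  have finA: "finite A" using finS unfolding A_def by simp
  have finCC: "finite CC" using finA unfolding CC_def by simp
  have hC: "\<forall>C\<in>CC. \<forall>m. \<exists>N TE X. good E K C m N TE X"
  proof (intro ballI allI)
    fix C m' assume "C \<in> CC"
    then obtain y where yA: "y \<in> A" and C: "C = gcomp E A y" unfolding CC_def by blast
    have CA: "C \<subseteq> A" unfolding C by (rule comp_sub)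
    have CV: "C \<subseteq> V" using CA SV unfolding A_def by blast
    have cC: "sconn E C" unfolding C by (rule comp_sconn[OF yA])
    have tC: "TT E C = {} \<or> sconn E (TT E C)"
      using TT_child[OF sg SV cS T v(1) v(2), of y] yA unfolding C A_def by blast
    have "C \<subset> S" using CA v(1) unfolding A_def by blast
    then have card: "card C < card S" using psubset_card_mono[OF finS] by blast
    show "\<exists>N TE X. good E K C m' N TE X"
      using less(1)[OF card CV cC tC] unfolding K_def by blast
  qed
  have disj: "\<forall>C1\<in>CC. \<forall>C2\<in>CC. C1 \<noteq> C2 \<longrightarrow> C1 \<inter> C2 = {}"
    unfolding CC_def by (intro ballI impI, rule comp_disj)
  have nb: "\<forall>C\<in>CC. nbr E C \<subseteq> B \<and> C \<inter> B = {}"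
  proof
    fix C assume "C \<in> CC"
    then obtain y where yA: "y \<in> A" and C: "C = gcomp E A y" unfolding CC_def by blast
    have CA: "C \<subseteq> A" unfolding C by (rule comp_sub)
    have nS: "nbr E S \<inter> S = {}" unfolding nbr_def by auto
    have "C \<inter> B = {}" using CA nS unfolding A_def B_def by blast
    moreover have "nbr E C \<subseteq> B"
    proof
      fix w assume "w \<in> nbr E C"
      then obtain x where x: "x \<in> C" "adj E x w" "w \<notin> C" unfolding nbr_def by blast
      show "w \<in> B"
      proof (cases "w \<in> S")
        case True
        show ?thesis
        proof (cases "w = v")
          case True then show ?thesis unfolding B_def by simp
        next
          case False
          then have "w \<in> A" using \<open>w \<in> S\<close> unfolding A_def by blast
          then have "w \<in> C" using comp_closed x(1,2) unfolding C by metis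
          then show ?thesis using x(3) by simp
        qed
      next
        case False
        have "x \<in> S" using x(1) CA unfolding A_def by blast
        then have "w \<in> nbr E S" using False x(2) unfolding nbr_def by blast
        then show ?thesis unfolding B_def by simp
      qed
    qed
    ultimately show "nbr E C \<subseteq> B \<and> C \<inter> B = {}" by simp
  qed
  have finN: "finite (nbr E S)"
    using finite_subset[OF subset_trans[OF nbr_TT[of E S]] finV] reach_V[OF sg SV] unfolding TT_def by blast
  have cardB: "card B \<le> K"
  proof -
    have "card B \<le> Suc (card (nbr E S))" unfolding B_def using card_insert_if[OF finN, of v] by simp
    moreover have "card (nbr E S) \<le> cocirc V E" by (rule nbr_le[OF sg SV cS T])
    ultimately show ?thesis unfolding K_def by simp
  qed
  obtain N TE X where D: "td' N TE X" "m \<in> N" "N \<subseteq> {m..}" "X m = B"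
     "\<forall>u\<in>N. X u \<subseteq> B \<union> \<Union>CC \<union> \<Union>(nbr E ` CC) \<and> card (X u) \<le> K" "\<Union>CC \<subseteq> \<Union>(X ` N)"
     "\<forall>e\<in>E. e \<inter> \<Union>CC \<noteq> {} \<longrightarrow> (\<exists>u\<in>N. e \<subseteq> X u)"
    using glue_many[OF finCC hC disj nb cardB, of m] by (elim exE conjE) (rule that)
  have UCC: "\<Union>CC = A" unfolding CC_def by (rule comp_union)
  have NB: "\<Union>(nbr E ` CC) \<subseteq> B" using nb by blast
  have BS: "B \<subseteq> S \<union> nbr E S" using v(1) unfolding B_def by blast
  have "good E K S m N TE X"
    unfolding good_def
  proof (intro conjI)
    show "td' N TE X" "m \<in> N" "N \<subseteq> {m..}" using D by auto
    show "\<forall>u\<in>N. X u \<subseteq> S \<union> nbr E S \<and> card (X u) \<le> K"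
    proof
      fix u assume "u \<in> N"
      then have "X u \<subseteq> B \<union> \<Union>CC \<union> \<Union>(nbr E ` CC)" "card (X u) \<le> K" using D(5) by auto
      moreover have "B \<union> \<Union>CC \<union> \<Union>(nbr E ` CC) \<subseteq> S \<union> nbr E S"
        using UCC NB BS unfolding A_def by blast
      ultimately show "X u \<subseteq> S \<union> nbr E S \<and> card (X u) \<le> K" by blast
    qed
    show "nbr E S \<subseteq> X m" using D(4) unfolding B_def by blast
    show "S \<subseteq> \<Union>(X ` N)"
    proof
      fix x assume "x \<in> S"
      show "x \<in> \<Union>(X ` N)"
      proof (cases "x = v")
        case True then have "x \<in> X m" using D(4) unfolding B_def by simp
        then show ?thesis using D(2) by blast
      next
        case False then have "x \<in> \<Union>CC" using \<open>x \<in> S\<close> UCC unfolding A_def by blast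
        then show ?thesis using D(6) by blast
      qed
    qed
    show "\<forall>e\<in>E. e \<inter> S \<noteq> {} \<longrightarrow> (\<exists>u\<in>N. e \<subseteq> X u)"
    proof (intro ballI impI)
      fix e assume e: "e \<in> E" "e \<inter> S \<noteq> {}"
      show "\<exists>u\<in>N. e \<subseteq> X u"
      proof (cases "e \<inter> \<Union>CC = {}")
        case False then show ?thesis using D(7) e(1) by blast
      next
        case True
        then have eA: "e \<inter> A = {}" using UCC by simp
        obtain x w where xw: "x \<noteq> w" "e = {x,w}" using sg_edge[OF sg e(1)] by blast
        have "e \<subseteq> B"
        proof -
          have vE: "v \<in> e" using e(2) eA unfolding A_def by blast
          obtain z where z: "e = {v,z}" "z \<noteq> v" using vE xw by (auto simp: doubleton_eq_iff)
          have "z \<notin> S" using eA z unfolding A_def by blast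
          moreover have "adj E v z" using z e(1) unfolding adj_def by simp
          ultimately have "z \<in> nbr E S" using v(1) unfolding nbr_def by blast
          then show ?thesis using z(1) unfolding B_def by blast
        qed
        then show ?thesis using D(2,4) by blast
      qed
    qed
  qed
  then show ?case unfolding K_def by blast
qed

theorem theorem1p3:
  fixes V :: "'a set" and E :: "'a set set"
  assumes "simple_graph V E" and "E \<noteq> {}"
  shows "treewidth V E \<le> cocirc V E"
proof -
  note sg = assms(1)
  define K where "K = cocirc V E + 1"
  have finV: "finite V" using sg unfolding simple_graph_def by simp
  define CC where "CC = gcomp E V ` V"
  have EV: "Esub E V = E" unfolding Esub_def using sg_edges_sub[OF sg] by blast
  have TTe: "TT E C = {}" if C: "C \<in> CC" for C
  proof -
    obtain y where y: "y \<in> V" "C = gcomp E V y" using C unfolding CC_def by blast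
    have "reach E C \<subseteq> C"
    proof
      fix z assume "z \<in> reach E C"
      then obtain x where x: "x \<in> C" "(adj E)\<^sup>*\<^sup>* x z" unfolding reach_def by blast
      have "(adj E)\<^sup>*\<^sup>* y x" using x(1) y(2) EV unfolding gcomp_def by simp
      then have yz: "(adj E)\<^sup>*\<^sup>* y z" using x(2) by (rule rtranclp_trans)
      have "z \<in> V" using reach_V[OF sg, of "{y}"] y(1) yz unfolding reach_def by blast
      then show "z \<in> C" using yz y(2) EV unfolding gcomp_def by simp
    qed
    then show ?thesis unfolding TT_def by blast
  qed
  have hC: "\<forall>C\<in>CC. \<forall>m. \<exists>N TE X. good E K C m N TE X"
  proof (intro ballI allI)
    fix C m assume C: "C \<in> CC"
    then obtain y where y: "y \<in> V" "C = gcomp E V y" unfolding CC_def by blast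
    have "C \<subseteq> V" using y(2) comp_sub by metis
    moreover have "sconn E C" using y comp_sconn by metis
    ultimately show "\<exists>N TE X. good E K C m N TE X" using main_Q[OF sg, of C m] TTe[OF C] unfolding K_def by simp
  qed
  have disj: "\<forall>C1\<in>CC. \<forall>C2\<in>CC. C1 \<noteq> C2 \<longrightarrow> C1 \<inter> C2 = {}"
    unfolding CC_def by (intro ballI impI, rule comp_disj)
  have nb: "\<forall>C\<in>CC. nbr E C \<subseteq> {} \<and> C \<inter> {} = {}"
  proof
    fix C assume "C \<in> CC"
    then show "nbr E C \<subseteq> {} \<and> C \<inter> {} = {}" using TTe nbr_TT[of E C] by simp
  qed
  have finCC: "finite CC" using finV unfolding CC_def by simp
  have c0: "card ({}::'a set) \<le> K" by simp
  obtain N TE X where D: "td' N TE X" "0 \<in> N" "N \<subseteq> {0..}" "X 0 = {}"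
     "\<forall>u\<in>N. X u \<subseteq> {} \<union> \<Union>CC \<union> \<Union>(nbr E ` CC) \<and> card (X u) \<le> K" "\<Union>CC \<subseteq> \<Union>(X ` N)"
     "\<forall>e\<in>E. e \<inter> \<Union>CC \<noteq> {} \<longrightarrow> (\<exists>u\<in>N. e \<subseteq> X u)"
    using glue_many[OF finCC hC disj nb c0, of 0] by (elim exE conjE) (rule that)
  have UCC: "\<Union>CC = V" unfolding CC_def by (rule comp_union)
  have NB: "\<Union>(nbr E ` CC) = {}" using nb by blast
  have tree: "is_tree N TE" using D(1) unfolding td'_def by simp
  have finN: "finite N" using td_finite[OF D(1)] .
  have bagsV: "\<forall>u\<in>N. X u \<subseteq> V" using D(5) UCC NB by auto
  have TD: "tree_decomposition V E N TE X"
    unfolding tree_decomposition_def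
  proof (intro conjI)
    show "is_tree N TE" by (rule tree)
    show "\<forall>u\<in>N. X u \<subseteq> V" by (rule bagsV)
    show "\<forall>x\<in>V. connected_graph {u\<in>N. x \<in> X u} {e\<in>TE. e \<subseteq> {u\<in>N. x \<in> X u}}"
    proof
      fix x assume "x \<in> V"
      then have "x \<in> \<Union>(X ` N)" using D(6) UCC by blast
      then show "connected_graph {u\<in>N. x \<in> X u} {e\<in>TE. e \<subseteq> {u\<in>N. x \<in> X u}}"
        using D(1) unfolding td'_def by (rule bspec[OF conjunct2, rotated])
    qed
    show "\<forall>e\<in>E. \<exists>u\<in>N. e \<subseteq> X u"
    proof
      fix e assume e: "e \<in> E"
      obtain x w where "x \<noteq> w" "x \<in> V" "e = {x,w}" using sg_edge[OF sg e] by blast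
      then have "e \<inter> \<Union>CC \<noteq> {}" using UCC by blast
      then show "\<exists>u\<in>N. e \<subseteq> X u" using D(7) e by blast
    qed
  qed
  have w: "td_width N X \<le> cocirc V E"
  proof -
    have "Max ((\<lambda>u. card (X u)) ` N) \<le> K"
      using D(2,5) finN by (subst Max_le_iff) auto
    then show ?thesis unfolding td_width_def K_def by simp
  qed
  define W where "W = {td_width N X | N TE X. tree_decomposition V E N TE X}"
  have inW: "td_width N X \<in> W" unfolding W_def using TD by blast
  have finW: "finite W"
  proof -
    have "W \<subseteq> {..card V}"
    proof
      fix t assume "t \<in> W"
      then obtain N' TE' X' where t: "t = td_width N' X'" "tree_decomposition V E N' TE' X'"
        unfolding W_def by blast
      have tr: "is_tree N' TE'" using t(2) unfolding tree_decomposition_def by simp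
      have fN: "finite N'" "N' \<noteq> {}" using tr unfolding is_tree_def simple_graph_def connected_graph_def by auto
      have "\<forall>u\<in>N'. X' u \<subseteq> V" using t(2) unfolding tree_decomposition_def by simp
      then have "\<forall>u\<in>N'. card (X' u) \<le> card V" using card_mono[OF finV] by simp
      then have "Max ((\<lambda>u. card (X' u)) ` N') \<le> card V" using fN by (subst Max_le_iff) auto
      then show "t \<in> {..card V}" unfolding t(1) td_width_def by simp
    qed
    then show ?thesis using finite_subset[OF _ finite_atMost] by blast
  qed
  have "treewidth V E \<le> td_width N X" unfolding treewidth_def W_def[symmetric] by (rule Min_le[OF finW inW])
  then show ?thesis using w by simp
qed

end
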